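(* Let $\mathcal G$ be a good and equicontinuous pseudogroup on a compact metric space $X$, with good generating set $\mathcal G_1$ and compacted generating set $\mathcal G_2$. Then there is no Borel probability measure on $X$ that is $(\mathcal G,\mathcal G_2)$-weakly expansive.
   Context: $\mathrm{Homeo}(X)$: homeomorphisms $g:D_g\to R_g$ between open subsets of $X$, composed on natural domains $D_{h\circ g}=g^{-1}(D_h)$. A pseudogroup is a subset of $\mathrm{Homeo}(X)$ containing $\mathrm{id}_X$, closed under composition, inversion, restriction to open subsets, and gluing along open covers of the domain. $\Gamma$ generates $\mathcal G$ if $\bigcup_{g\in\Gamma}(D_g\cup R_g)=X$ and $\mathcal G$ is exactly the set of $g\in\mathrm{Homeo}(X)$ locally equal near each point of $D_g$ to a finite composition of elements of $\Gamma$ and their inverses. A finite symmetric (containing $\mathrm{id}_X$, closed under inverses) generating set $\mathcal G_1$ is good if for each $g\in\mathcal G_1$ there is a compact $K_g\subset D_g$ such that $\mathcal G_2=\{g|_{\mathrm{int}(K_g)}:g\in\mathcal G_1\}$ still generates $\mathcal G$ ($\mathcal G_2$ is the compacted generating set; $\mathcal G$ is good if it has a good generating set). $\mathcal G$ is equicontinuous if it has a generating set $\Gamma$ closed under composition and inversion and satisfying: for every $\varepsilon>0$ there is $\delta>0$ such that for all $x,y\in X$ and $g\in\Gamma$ with $x,y\in D_g$, $d(x,y)<\delta\Rightarrow d(g(x),g(y))<\varepsilon$. Let $\mathcal G^2_n=\{h_1\circ\cdots\circ h_n:h_j\in\mathcal G_2\}$, $\mathcal G^{2,x}_n=\{g\in\mathcal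 G^2_n:x\in D_g\}$, $\Phi^2_\delta(x)=\{y:d(g(x),g(y))\le\delta\ \forall n\in\mathbb N,\ \forall g\in\mathcal G^{2,x}_n\cap\mathcal G^{2,y}_n\}$. A Borel probability measure $\mu$ is $(\mathcal G,\mathcal G_2)$-weakly expansive if there is $\delta>0$ with $\mu(\Phi^2_\delta(x))=0$ for $\mu$-a.e. $x$. *)

theory Defs
  imports "HOL-Analysis.Analysis" "HOL-Probability.Probability"
begin

text \<open>A partial map on X is represented as a pair (D, f): domain D and map f,
  normalised so that f is undefined outside D (f \<in> extensional D).\<close>

type_synonym 'a pmap = "'a set \<times> ('a \<Rightarrow> 'a)"

definition pdom :: "'a pmap \<Rightarrow> 'a set" where "pdom g = fst g"
definition pfun :: "'a pmap \<Rightarrow> 'a \<Rightarrow> 'a" where "pfun g = snd g"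
definition pran :: "'a pmap \<Rightarrow> 'a set" where "pran g = pfun g ` pdom g"

definition phomeo :: "'a::topological_space set \<Rightarrow> 'a pmap \<Rightarrow> bool" where
  "phomeo X g \<longleftrightarrow> openin (top_of_set X) (pdom g) \<and> openin (top_of_set X) (pran g)
     \<and> (\<exists>h. homeomorphism (pdom g) (pran g) (pfun g) h) \<and> pfun g \<in> extensional (pdom g)"

definition pcomp :: "'a pmap \<Rightarrow> 'a pmap \<Rightarrow> 'a pmap" where
  "pcomp h g = (let D = pdom g \<inter> pfun g -` pdom h in (D, restrict (pfun h \<circ> pfun g) D))"

definition pinv :: "'a pmap \<Rightarrow> 'a pmap" where
  "pinv g = (pran g, restrict (inv_into (pdom g) (pfun g)) (pran g))"

definition prestr :: "'a pmap \<Rightarrow> 'a set \<Rightarrow> 'a pmap" where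
  "prestr g U = (U, restrict (pfun g) U)"

definition pid :: "'a set \<Rightarrow> 'a pmap" where
  "pid X = (X, restrict id X)"

definition pword :: "'a set \<Rightarrow> 'a pmap list \<Rightarrow> 'a pmap" where
  "pword X ws = foldr pcomp ws (pid X)"

definition pseudogroup :: "'a::topological_space set \<Rightarrow> 'a pmap set \<Rightarrow> bool" where
  "pseudogroup X G \<longleftrightarrow>
     G \<subseteq> Collect (phomeo X) \<and> pid X \<in> G
     \<and> (\<forall>g\<in>G. \<forall>h\<in>G. pcomp h g \<in> G)
     \<and> (\<forall>g\<in>G. pinv g \<in> G)
     \<and> (\<forall>g\<in>G. \<forall>U. openin (top_of_set X) U \<and> U \<subseteq> pdom g \<longrightarrow> prestr g U \<in> G)
     \<and> (\<forall>g. phomeo X g \<and>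
            (\<forall>x\<in>pdom g. \<exists>U. openin (top_of_set X) U \<and> x \<in> U \<and> U \<subseteq> pdom g \<and> prestr g U \<in> G)
            \<longrightarrow> g \<in> G)"

definition generates :: "'a::topological_space set \<Rightarrow> 'a pmap set \<Rightarrow> 'a pmap set \<Rightarrow> bool" where
  "generates X \<Gamma> G \<longleftrightarrow>
     \<Gamma> \<subseteq> Collect (phomeo X)
     \<and> (\<Union>g\<in>\<Gamma>. pdom g \<union> pran g) = X
     \<and> G = {g. phomeo X g \<and>
              (\<forall>x\<in>pdom g. \<exists>U ws. openin (top_of_set X) U \<and> x \<in> U \<and> U \<subseteq> pdom g
                  \<and> set ws \<subseteq> \<Gamma> \<union> pinv ` \<Gamma>
                  \<and> U \<subseteq> pdom (pword X ws)
                  \<and> (\<forall>y\<in>U. pfun g y = pfun (pword X ws) y))}"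

definition equicontinuous_pg :: "'a::metric_space set \<Rightarrow> 'a pmap set \<Rightarrow> bool" where
  "equicontinuous_pg X G \<longleftrightarrow>
     (\<exists>\<Gamma>. generates X \<Gamma> G
        \<and> (\<forall>g\<in>\<Gamma>. \<forall>h\<in>\<Gamma>. pcomp h g \<in> \<Gamma>)
        \<and> (\<forall>g\<in>\<Gamma>. pinv g \<in> \<Gamma>)
        \<and> (\<forall>\<epsilon>>0. \<exists>\<delta>>0. \<forall>x\<in>X. \<forall>y\<in>X. \<forall>g\<in>\<Gamma>.
              x \<in> pdom g \<and> y \<in> pdom g \<and> dist x y < \<delta>
              \<longrightarrow> dist (pfun g x) (pfun g y) < \<epsilon>))"

definition compacted :: "'a::topological_space set \<Rightarrow> 'a pmap set \<Rightarrow> ('a pmap \<Rightarrow> 'a set) \<Rightarrow> 'a pmap set" where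
  "compacted X G1 K = (\<lambda>g. prestr g ((top_of_set X) interior_of (K g))) ` G1"

definition good_generating_set ::
  "'a::topological_space set \<Rightarrow> 'a pmap set \<Rightarrow> 'a pmap set \<Rightarrow> ('a pmap \<Rightarrow> 'a set) \<Rightarrow> bool" where
  "good_generating_set X G G1 K \<longleftrightarrow>
     finite G1 \<and> pid X \<in> G1 \<and> (\<forall>g\<in>G1. pinv g \<in> G1) \<and> generates X G1 G
     \<and> (\<forall>g\<in>G1. compact (K g) \<and> K g \<subseteq> pdom g)
     \<and> generates X (compacted X G1 K) G"

definition pcomps :: "'a set \<Rightarrow> 'a pmap set \<Rightarrow> nat \<Rightarrow> 'a pmap set" where
  "pcomps X G2 n = {pword X ws | ws. length ws = n \<and> set ws \<subseteq> G2}"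

definition Phi :: "'a::metric_space set \<Rightarrow> 'a pmap set \<Rightarrow> real \<Rightarrow> 'a \<Rightarrow> 'a set" where
  "Phi X G2 \<delta> x = {y \<in> X. \<forall>n\<ge>1. \<forall>g\<in>pcomps X G2 n.
        x \<in> pdom g \<and> y \<in> pdom g \<longrightarrow> dist (pfun g x) (pfun g y) \<le> \<delta>}"

definition borel_probability :: "'a::metric_space set \<Rightarrow> 'a measure \<Rightarrow> bool" where
  "borel_probability X \<mu> \<longleftrightarrow> prob_space \<mu> \<and> sets \<mu> = sets (restrict_space borel X)"

definition weakly_expansive :: "'a::metric_space set \<Rightarrow> 'a pmap set \<Rightarrow> 'a measure \<Rightarrow> bool" where
  "weakly_expansive X G2 \<mu> \<longleftrightarrow>
     (\<exists>\<delta>>0. AE x in \<mu>. Phi X G2 \<delta> x \<in> sets \<mu> \<and> emeasure \<mu> (Phi X G2 \<delta> x) = 0)"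

end

theory Submission
  imports Defs
begin

lemma pcomp_dom: "z \<in> pdom (pcomp h g) \<longleftrightarrow> z \<in> pdom g \<and> pfun g z \<in> pdom h"
  by (simp add: pcomp_def pdom_def pfun_def Let_def)

lemma pcomp_fun: "z \<in> pdom (pcomp h g) \<Longrightarrow> pfun (pcomp h g) z = pfun h (pfun g z)"
  by (simp add: pcomp_def pdom_def pfun_def Let_def)

lemma pid_dom: "pdom (pid X) = X" by (simp add: pid_def pdom_def)
lemma pid_fun: "z \<in> X \<Longrightarrow> pfun (pid X) z = z" by (simp add: pid_def pfun_def)

lemma prestr_dom: "pdom (prestr g U) = U" by (simp add: prestr_def pdom_def)
lemma prestr_fun: "z \<in> U \<Longrightarrow> pfun (prestr g U) z = pfun g z" by (simp add: prestr_def pfun_def)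

lemma pword_Nil: "pword X [] = pid X" by (simp add: pword_def)
lemma pword_Cons: "pword X (a # ws) = pcomp a (pword X ws)" by (simp add: pword_def)

lemma pword_dom_sub: "pdom (pword X ws) \<subseteq> X"
  by (induction ws) (auto simp: pword_Nil pword_Cons pid_dom pcomp_dom)

lemma pword_append: "pword X (u @ ws) = foldr pcomp u (pword X ws)"
  by (simp add: pword_def)

lemma foldr_sem:
  assumes "z \<in> pdom c" "pfun c z \<in> pdom (pword X u)"
  shows "z \<in> pdom (foldr pcomp u c) \<and> pfun (foldr pcomp u c) z = pfun (pword X u) (pfun c z)"
  using assms
proof (induction u)
  case Nil
  then show ?case by (simp add: pword_Nil pid_dom pid_fun)
next
  case (Cons a u)
  from Cons.prems(2) have h1: "pfun c z \<in> pdom (pword X u)" and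
    h2: "pfun (pword X u) (pfun c z) \<in> pdom a"
    by (auto simp: pword_Cons pcomp_dom)
  from Cons.IH[OF Cons.prems(1) h1] have ih: "z \<in> pdom (foldr pcomp u c)"
    "pfun (foldr pcomp u c) z = pfun (pword X u) (pfun c z)" by auto
  have d: "z \<in> pdom (pcomp a (foldr pcomp u c))" using ih h2 by (simp add: pcomp_dom)
  have d2: "pfun c z \<in> pdom (pcomp a (pword X u))" using h1 h2 by (simp add: pcomp_dom)
  show ?case using d d2 ih by (simp add: pword_Cons pcomp_fun)
qed

lemma word_in_Gamma:
  assumes cl: "\<forall>g\<in>\<Gamma>. \<forall>h\<in>\<Gamma>. pcomp h g \<in> \<Gamma>"
  shows "set ws \<subseteq> \<Gamma> \<Longrightarrow> ws \<noteq> [] \<Longrightarrow>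
    \<exists>\<gamma>\<in>\<Gamma>. \<forall>z\<in>pdom (pword X ws). z \<in> pdom \<gamma> \<and> pfun (pword X ws) z = pfun \<gamma> z"
proof (induction ws)
  case Nil
  then show ?case by simp
next
  case (Cons a ws)
  show ?case
  proof (cases "ws = []")
    case True
    show ?thesis
      apply (rule bexI[of _ a])
      using True Cons.prems by (auto simp: pword_Cons pword_Nil pcomp_dom pcomp_fun pid_dom pid_fun)
  next
    case False
    then obtain \<gamma> where g: "\<gamma> \<in> \<Gamma>" "\<forall>z\<in>pdom (pword X ws). z \<in> pdom \<gamma> \<and> pfun (pword X ws) z = pfun \<gamma> z"
      using Cons by auto
    have "pcomp a \<gamma> \<in> \<Gamma>" using cl g(1) Cons.prems by auto
    moreover have "\<forall>z\<in>pdom (pword X (a # ws)). z \<in> pdom (pcomp a \<gamma>) \<and>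
        pfun (pword X (a # ws)) z = pfun (pcomp a \<gamma>) z"
      using g(2) by (auto simp: pword_Cons pcomp_dom pcomp_fun)
    ultimately show ?thesis by blast
  qed
qed


theorem mainTheorem18:
  fixes X :: "'a::metric_space set"
    and G G1 :: "'a pmap set"
    and K :: "'a pmap \<Rightarrow> 'a set"
  assumes "compact X"
    and "pseudogroup X G"
    and "equicontinuous_pg X G"
    and "good_generating_set X G G1 K"
  shows "\<not> (\<exists>\<mu>. borel_probability X \<mu> \<and> weakly_expansive X (compacted X G1 K) \<mu>)"
proof
  assume "\<exists>\<mu>. borel_probability X \<mu> \<and> weakly_expansive X (compacted X G1 K) \<mu>"
  then obtain \<mu> where bp: "borel_probability X \<mu>" and we: "weakly_expansive X (compacted X G1 K) \<mu>"
    by blast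
  define G2 where "G2 = compacted X G1 K"
  from we obtain \<delta> where d0: "\<delta> > 0" and
    ae: "AE x in \<mu>. Phi X G2 \<delta> x \<in> sets \<mu> \<and> emeasure \<mu> (Phi X G2 \<delta> x) = 0"
    unfolding weakly_expansive_def G2_def by blast
  from assms(3) obtain \<Gamma> where genG: "generates X \<Gamma> G"
    and clc: "\<forall>g\<in>\<Gamma>. \<forall>h\<in>\<Gamma>. pcomp h g \<in> \<Gamma>"
    and cli: "\<forall>g\<in>\<Gamma>. pinv g \<in> \<Gamma>"
    and eq: "\<forall>\<epsilon>>0. \<exists>\<delta>>0. \<forall>x\<in>X. \<forall>y\<in>X. \<forall>g\<in>\<Gamma>.
              x \<in> pdom g \<and> y \<in> pdom g \<and> dist x y < \<delta>
              \<longrightarrow> dist (pfun g x) (pfun g y) < \<epsilon>"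
    unfolding equicontinuous_pg_def by blast
  from assms(4) have finG1: "finite G1" and genG1: "generates X G1 G"
    and Kc: "\<forall>g\<in>G1. compact (K g) \<and> K g \<subseteq> pdom g"
    unfolding good_generating_set_def by auto
  have G1ph: "\<And>g. g \<in> G1 \<Longrightarrow> phomeo X g" using genG1 unfolding generates_def by auto
  have domX: "\<And>g. phomeo X g \<Longrightarrow> pdom g \<subseteq> X" unfolding phomeo_def
    by (meson openin_imp_subset)
  have G_eq: "G = {g. phomeo X g \<and>
              (\<forall>x\<in>pdom g. \<exists>U ws. openin (top_of_set X) U \<and> x \<in> U \<and> U \<subseteq> pdom g
                  \<and> set ws \<subseteq> \<Gamma> \<union> pinv ` \<Gamma>
                  \<and> U \<subseteq> pdom (pword X ws)
                  \<and> (\<forall>y\<in>U. pfun g y = pfun (pword X ws) y))}"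
    using conjunct2[OF conjunct2[OF genG[unfolded generates_def]]] .
  have G_eq1: "G = {g. phomeo X g \<and>
              (\<forall>x\<in>pdom g. \<exists>U ws. openin (top_of_set X) U \<and> x \<in> U \<and> U \<subseteq> pdom g
                  \<and> set ws \<subseteq> G1 \<union> pinv ` G1
                  \<and> U \<subseteq> pdom (pword X ws)
                  \<and> (\<forall>y\<in>U. pfun g y = pfun (pword X ws) y))}"
    using conjunct2[OF conjunct2[OF genG1[unfolded generates_def]]] .
  have G1G: "g \<in> G" if "g \<in> G1" for g
  proof -
    have ph: "phomeo X g" using G1ph that .
    have op: "openin (top_of_set X) (pdom g)" using ph unfolding phomeo_def by blast
    have sub: "pdom g \<subseteq> pdom (pword X [g])"
      using domX[OF ph] by (auto simp: pword_Cons pword_Nil pcomp_dom pid_dom pid_fun)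
    have eqv: "\<forall>y\<in>pdom g. pfun g y = pfun (pword X [g]) y"
    proof
      fix y assume y: "y \<in> pdom g"
      then have "y \<in> pdom (pcomp g (pid X))" "y \<in> X" using sub domX[OF ph]
        by (auto simp: pword_Cons pword_Nil)
      then show "pfun g y = pfun (pword X [g]) y" by (simp add: pword_Cons pword_Nil pcomp_fun pid_fun)
    qed
    have "\<forall>x\<in>pdom g. \<exists>U ws. openin (top_of_set X) U \<and> x \<in> U \<and> U \<subseteq> pdom g
                  \<and> set ws \<subseteq> G1 \<union> pinv ` G1
                  \<and> U \<subseteq> pdom (pword X ws)
                  \<and> (\<forall>y\<in>U. pfun g y = pfun (pword X ws) y)"
      using op sub eqv that by (intro ballI exI[of _ "pdom g"] exI[of _ "[g]"]) auto
    then have "g \<in> {g. phomeo X g \<and>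
              (\<forall>x\<in>pdom g. \<exists>U ws. openin (top_of_set X) U \<and> x \<in> U \<and> U \<subseteq> pdom g
                  \<and> set ws \<subseteq> G1 \<union> pinv ` G1
                  \<and> U \<subseteq> pdom (pword X ws)
                  \<and> (\<forall>y\<in>U. pfun g y = pfun (pword X ws) y))}" using ph by (intro CollectI conjI)
    then show ?thesis by (rule ssubst[OF G_eq1])
  qed
  have loc: "\<exists>V ws. open V \<and> x \<in> V \<and> X \<inter> V \<subseteq> pdom g \<and> set ws \<subseteq> \<Gamma>
      \<and> X \<inter> V \<subseteq> pdom (pword X ws) \<and> (\<forall>y\<in>X \<inter> V. pfun g y = pfun (pword X ws) y)"
    if gG1: "g \<in> G1" and xg: "x \<in> pdom g" for g x
  proof -
    have "g \<in> G" using G1G gG1 by blast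
    then obtain U ws where U: "openin (top_of_set X) U" "x\<in>U" "U \<subseteq> pdom g"
      "set ws \<subseteq> \<Gamma> \<union> pinv ` \<Gamma>" "U \<subseteq> pdom (pword X ws)" "\<forall>y\<in>U. pfun g y = pfun (pword X ws) y"
      using \<open>g \<in> G\<close> xg unfolding G_eq by blast
    obtain V where V: "open V" "U = X \<inter> V" using U(1) openin_open by blast
    have "set ws \<subseteq> \<Gamma>" using U(4) cli by auto
    then show ?thesis using U V by blast
  qed
  have leb: "\<exists>r>0. \<forall>x\<in>K g. \<exists>ws. set ws \<subseteq> \<Gamma> \<and> X \<inter> ball x r \<subseteq> pdom g \<inter> pdom (pword X ws)
      \<and> (\<forall>y\<in>X \<inter> ball x r. pfun g y = pfun (pword X ws) y)" if "g \<in> G1" for g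
  proof -
    define \<G> where "\<G> = {V. open V \<and> (\<exists>ws. set ws \<subseteq> \<Gamma> \<and> X \<inter> V \<subseteq> pdom g \<inter> pdom (pword X ws)
       \<and> (\<forall>y\<in>X \<inter> V. pfun g y = pfun (pword X ws) y))}"
    have "K g \<subseteq> \<Union>\<G>"
    proof
      fix x assume "x \<in> K g"
      then have "x \<in> pdom g" using Kc that by auto
      from loc[OF that this] obtain V ws where "open V" "x \<in> V" "X \<inter> V \<subseteq> pdom g" "set ws \<subseteq> \<Gamma>"
        "X \<inter> V \<subseteq> pdom (pword X ws)" "\<forall>y\<in>X \<inter> V. pfun g y = pfun (pword X ws) y" by blast
      then show "x \<in> \<Union>\<G>" unfolding \<G>_def by blast
    qed
    moreover have "compact (K g)" using Kc that by auto
    moreover have "\<And>V. V \<in> \<G> \<Longrightarrow> open V" unfolding \<G>_def by blast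
    ultimately obtain r where r: "r > 0" "\<And>x. x \<in> K g \<Longrightarrow> \<exists>V\<in>\<G>. ball x r \<subseteq> V"
      using Heine_Borel_lemma[of "K g" \<G>] by blast
    show ?thesis
    proof (intro exI[of _ r] conjI ballI)
      show "r > 0" by fact
      fix x assume "x \<in> K g"
      then obtain V where "V \<in> \<G>" "ball x r \<subseteq> V" using r(2) by blast
      then obtain ws where "set ws \<subseteq> \<Gamma>" "X \<inter> V \<subseteq> pdom g \<inter> pdom (pword X ws)"
        "\<forall>y\<in>X \<inter> V. pfun g y = pfun (pword X ws) y" unfolding \<G>_def by (auto simp only: mem_Collect_eq)
      then show "\<exists>ws. set ws \<subseteq> \<Gamma> \<and> X \<inter> ball x r \<subseteq> pdom g \<inter> pdom (pword X ws)
      \<and> (\<forall>y\<in>X \<inter> ball x r. pfun g y = pfun (pword X ws) y)"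
        using \<open>ball x r \<subseteq> V\<close> by blast
    qed
  qed
  define Q where "Q = (\<lambda>g r. r > 0 \<and> (\<forall>x\<in>K g. \<exists>ws. set ws \<subseteq> \<Gamma>
      \<and> X \<inter> ball x r \<subseteq> pdom g \<inter> pdom (pword X ws)
      \<and> (\<forall>y\<in>X \<inter> ball x r. pfun g y = pfun (pword X ws) y)))"
  have lebb: "\<forall>g\<in>G1. \<exists>r. Q g r" unfolding Q_def using leb by blast
  obtain rf where rf0: "\<forall>g\<in>G1. Q g (rf g)" using bchoice[OF lebb] by (elim exE)
  have rf: "\<And>g. g \<in> G1 \<Longrightarrow> rf g > 0 \<and> (\<forall>x\<in>K g. \<exists>ws. set ws \<subseteq> \<Gamma>
      \<and> X \<inter> ball x (rf g) \<subseteq> pdom g \<inter> pdom (pword X ws)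
      \<and> (\<forall>y\<in>X \<inter> ball x (rf g). pfun g y = pfun (pword X ws) y))"
    using rf0 unfolding Q_def by blast
  define r where "r = Min (insert 1 (rf ` G1))"
  have r0: "r > 0" unfolding r_def using finG1 rf by (subst Min_gr_iff) auto
  have rle: "r \<le> rf g" if "g \<in> G1" for g
    unfolding r_def using finG1 that by (intro Min_le) auto
  have lebr: "\<exists>ws. set ws \<subseteq> \<Gamma> \<and> X \<inter> ball x r \<subseteq> pdom g \<inter> pdom (pword X ws)
      \<and> (\<forall>y\<in>X \<inter> ball x r. pfun g y = pfun (pword X ws) y)" if gG1: "g \<in> G1" and xK: "x \<in> K g" for g x
  proof -
    obtain ws where "set ws \<subseteq> \<Gamma>" "X \<inter> ball x (rf g) \<subseteq> pdom g \<inter> pdom (pword X ws)"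
      "\<forall>y\<in>X \<inter> ball x (rf g). pfun g y = pfun (pword X ws) y" using rf gG1 xK by blast
    moreover have "ball x r \<subseteq> ball x (rf g)" using rle[OF gG1] by auto
    ultimately show ?thesis by blast
  qed
  have wordeq: "\<exists>\<epsilon>>0. \<forall>ws x y. set ws \<subseteq> \<Gamma> \<longrightarrow> x \<in> pdom (pword X ws) \<longrightarrow> y \<in> pdom (pword X ws)
      \<longrightarrow> dist x y < \<epsilon> \<longrightarrow> dist (pfun (pword X ws) x) (pfun (pword X ws) y) < \<eta>" if eta0: "\<eta> > 0" for \<eta>
  proof -
    obtain d where d: "d>0" "\<forall>x\<in>X. \<forall>y\<in>X. \<forall>g\<in>\<Gamma>. x \<in> pdom g \<and> y \<in> pdom g \<and> dist x y < d
       \<longrightarrow> dist (pfun g x) (pfun g y) < \<eta>" using eq eta0 by blast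
    show ?thesis
    proof (intro exI[of _ "min d \<eta>"] conjI allI impI)
      show "min d \<eta> > 0" using d(1) eta0 by simp
      fix ws x y assume a: "set ws \<subseteq> \<Gamma>" "x \<in> pdom (pword X ws)" "y \<in> pdom (pword X ws)"
        "dist x y < min d \<eta>"
      have xX: "x \<in> X" "y \<in> X" using a(2,3) pword_dom_sub[of X ws] by auto
      show "dist (pfun (pword X ws) x) (pfun (pword X ws) y) < \<eta>"
      proof (cases "ws = []")
        case True then show ?thesis using a xX by (simp add: pword_Nil pid_fun)
      next
        case False
        from word_in_Gamma[OF clc a(1) False] obtain \<gamma> where
          "\<gamma> \<in> \<Gamma>" "\<forall>z\<in>pdom (pword X ws). z \<in> pdom \<gamma> \<and> pfun (pword X ws) z = pfun \<gamma> z" by blast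
        then have "x \<in> pdom \<gamma>" "y \<in> pdom \<gamma>" "pfun (pword X ws) x = pfun \<gamma> x"
          "pfun (pword X ws) y = pfun \<gamma> y" using a(2,3) by auto
        moreover have "dist x y < d" using a(4) by simp
        ultimately show ?thesis using d(2) xX \<open>\<gamma> \<in> \<Gamma>\<close> by simp
      qed
    qed
  qed
  obtain \<epsilon> where e0: "\<epsilon> > 0" and eps: "\<forall>ws x y. set ws \<subseteq> \<Gamma> \<longrightarrow> x \<in> pdom (pword X ws)
      \<longrightarrow> y \<in> pdom (pword X ws)
      \<longrightarrow> dist x y < \<epsilon> \<longrightarrow> dist (pfun (pword X ws) x) (pfun (pword X ws) y) < min \<delta> r"
    using wordeq[of "min \<delta> r"] d0 r0 by auto
  have claim: "set hs \<subseteq> G2 \<longrightarrow> x \<in> pdom (pword X hs) \<longrightarrow> y \<in> pdom (pword X hs) \<longrightarrow> dist x y < \<epsilon>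
     \<longrightarrow> (\<exists>ws. set ws \<subseteq> \<Gamma> \<and> x \<in> pdom (pword X ws) \<and> y \<in> pdom (pword X ws)
          \<and> pfun (pword X hs) x = pfun (pword X ws) x \<and> pfun (pword X hs) y = pfun (pword X ws) y)"
    for x y hs
  proof (induction hs)
    case Nil
    show ?case by (intro impI exI[of _ "[]"]) auto
  next
    case (Cons h hs)
    show ?case
    proof (intro impI)
      assume a: "set (h # hs) \<subseteq> G2" "x \<in> pdom (pword X (h # hs))" "y \<in> pdom (pword X (h # hs))"
        "dist x y < \<epsilon>"
      have xd: "x \<in> pdom (pword X hs)" "pfun (pword X hs) x \<in> pdom h"
        using a(2) by (auto simp: pword_Cons pcomp_dom)
      have yd: "y \<in> pdom (pword X hs)" "pfun (pword X hs) y \<in> pdom h"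
        using a(3) by (auto simp: pword_Cons pcomp_dom)
      have hsG: "set hs \<subseteq> G2" using a(1) by simp
      obtain ws' where ws': "set ws' \<subseteq> \<Gamma>" "x \<in> pdom (pword X ws')" "y \<in> pdom (pword X ws')"
        "pfun (pword X hs) x = pfun (pword X ws') x" "pfun (pword X hs) y = pfun (pword X ws') y"
        using Cons.IH[THEN mp, OF hsG, THEN mp, OF xd(1), THEN mp, OF yd(1), THEN mp, OF a(4)] by blast
      define x' where "x' = pfun (pword X hs) x"
      define y' where "y' = pfun (pword X hs) y"
      have dxy: "dist x' y' < min \<delta> r" using eps[rule_format, OF ws'(1-3) a(4)] unfolding x'_def y'_def ws'(4,5) .
      from a(1) have "h \<in> G2" by auto
      then obtain g where g: "g \<in> G1" "h = prestr g (top_of_set X interior_of K g)"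
        unfolding G2_def compacted_def by auto
      have x'i: "x' \<in> top_of_set X interior_of K g" using xd(2) g(2) unfolding x'_def
        by (simp add: prestr_dom)
      have y'i: "y' \<in> top_of_set X interior_of K g" using yd(2) g(2) unfolding y'_def
        by (simp add: prestr_dom)
      have KX: "K g \<subseteq> X" using Kc g(1) domX[OF G1ph[OF g(1)]] by auto
      have x'K: "x' \<in> K g" and y'K: "y' \<in> K g" using x'i y'i interior_of_subset[of "top_of_set X" "K g"] by auto
      from lebr[OF g(1) x'K] obtain u where u: "set u \<subseteq> \<Gamma>"
        "X \<inter> ball x' r \<subseteq> pdom g \<inter> pdom (pword X u)"
        "\<forall>z\<in>X \<inter> ball x' r. pfun g z = pfun (pword X u) z" by blast
      have x'b: "x' \<in> X \<inter> ball x' r" using r0 x'K KX by auto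
      have y'b: "y' \<in> X \<inter> ball x' r" using dxy y'K KX by auto
      have hx: "pfun h x' = pfun (pword X u) x'" using g(2) x'i u(3) x'b by (simp add: prestr_fun)
      have hy: "pfun h y' = pfun (pword X u) y'" using g(2) y'i u(3) y'b by (simp add: prestr_fun)
      have fx: "x \<in> pdom (pword X (u @ ws')) \<and> pfun (pword X (u @ ws')) x = pfun (pword X u) x'"
        unfolding pword_append using foldr_sem[of x "pword X ws'" X u] ws' u(2) x'b
        unfolding x'_def by auto
      have fy: "y \<in> pdom (pword X (u @ ws')) \<and> pfun (pword X (u @ ws')) y = pfun (pword X u) y'"
        unfolding pword_append using foldr_sem[of y "pword X ws'" X u] ws' u(2) y'b
        unfolding y'_def by auto
      have ex: "pfun (pword X (h # hs)) x = pfun h x'" using a(2) unfolding x'_def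
        by (simp add: pword_Cons pcomp_fun)
      have ey: "pfun (pword X (h # hs)) y = pfun h y'" using a(3) unfolding y'_def
        by (simp add: pword_Cons pcomp_fun)
      show "\<exists>ws. set ws \<subseteq> \<Gamma> \<and> x \<in> pdom (pword X ws) \<and> y \<in> pdom (pword X ws)
          \<and> pfun (pword X (h # hs)) x = pfun (pword X ws) x \<and> pfun (pword X (h # hs)) y = pfun (pword X ws) y"
        apply (rule exI[of _ "u @ ws'"])
        using fx fy ex ey hx hy u(1) ws'(1) by auto
    qed
  qed
  have Phisub: "X \<inter> ball x \<epsilon> \<subseteq> Phi X G2 \<delta> x" for x
  proof
    fix y assume y: "y \<in> X \<inter> ball x \<epsilon>"
    show "y \<in> Phi X G2 \<delta> x" unfolding Phi_def
    proof (intro CollectI conjI allI impI ballI)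
      show "y \<in> X" using y by auto
      fix n g assume "n \<ge> 1" "g \<in> pcomps X G2 n" "x \<in> pdom g \<and> y \<in> pdom g"
      then obtain hs where hs: "g = pword X hs" "set hs \<subseteq> G2" "x \<in> pdom g" "y \<in> pdom g"
        unfolding pcomps_def by auto
      have "dist x y < \<epsilon>" using y by auto
      then obtain ws where "set ws \<subseteq> \<Gamma>" "x \<in> pdom (pword X ws)" "y \<in> pdom (pword X ws)"
          "pfun g x = pfun (pword X ws) x" "pfun g y = pfun (pword X ws) y"
        using claim[of hs x y] hs by auto
      then have "dist (pfun g x) (pfun g y) < min \<delta> r" using eps[rule_format, of ws x y] \<open>dist x y < \<epsilon>\<close> by simp
      then show "dist (pfun g x) (pfun g y) \<le> \<delta>" by simp
    qed
  qed
  have prob: "prob_space \<mu>" and sets\<mu>: "sets \<mu> = sets (restrict_space borel X)"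
    using bp unfolding borel_probability_def by auto
  have sp: "space \<mu> = X" using sets_eq_imp_space_eq[OF sets\<mu>] by (simp add: space_restrict_space)
  have ballsets: "X \<inter> ball c e \<in> sets \<mu>" for c e
    unfolding sets\<mu> sets_restrict_space by auto
  obtain C where C: "C \<subseteq> X" "finite C" "X \<subseteq> \<Union> ((\<lambda>c. ball c (\<epsilon>/2)) ` C)"
  proof (rule compactE_image[OF assms(1), of X "\<lambda>c. ball c (\<epsilon>/2)"])
    show "X \<subseteq> \<Union> ((\<lambda>c. ball c (\<epsilon>/2)) ` X)" using e0 by auto
  qed auto
  have aeC: "AE z in \<mu>. z \<notin> X \<inter> ball c (\<epsilon>/2)" if "c \<in> C" for c
  proof (cases "emeasure \<mu> (X \<inter> ball c (\<epsilon>/2)) = 0")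
    case True then show ?thesis by (intro AE_not_in) (simp add: null_sets_def ballsets)
  next
    case False
    show ?thesis using ae
    proof (rule eventually_mono)
      fix z assume P: "Phi X G2 \<delta> z \<in> sets \<mu> \<and> emeasure \<mu> (Phi X G2 \<delta> z) = 0"
      show "z \<notin> X \<inter> ball c (\<epsilon>/2)"
      proof
        assume z: "z \<in> X \<inter> ball c (\<epsilon>/2)"
        have "X \<inter> ball c (\<epsilon>/2) \<subseteq> X \<inter> ball z \<epsilon>"
        proof
          fix w assume w: "w \<in> X \<inter> ball c (\<epsilon>/2)"
          have "dist z w \<le> dist z c + dist c w" by (rule dist_triangle)
          also have "\<dots> < \<epsilon>" using z w by (simp add: dist_commute)
          finally show "w \<in> X \<inter> ball z \<epsilon>" using w by simp
        qed
        also have "\<dots> \<subseteq> Phi X G2 \<delta> z" by (rule Phisub)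
        finally have "emeasure \<mu> (X \<inter> ball c (\<epsilon>/2)) \<le> emeasure \<mu> (Phi X G2 \<delta> z)"
          using P by (intro emeasure_mono) auto
        then show False using P False by simp
      qed
    qed
  qed
  have "AE z in \<mu>. \<forall>c\<in>C. z \<notin> X \<inter> ball c (\<epsilon>/2)"
    by (rule eventually_ball_finite[OF C(2), of "\<lambda>z c. z \<notin> X \<inter> ball c (\<epsilon>/2)"])
      (use aeC in blast)
  with AE_space have "AE z in \<mu>. z \<in> space \<mu> \<and> (\<forall>c\<in>C. z \<notin> X \<inter> ball c (\<epsilon>/2))"
    by (rule eventually_conj)
  then have "AE z in \<mu>. False"
  proof (rule eventually_mono)
    fix z assume "z \<in> space \<mu> \<and> (\<forall>c\<in>C. z \<notin> X \<inter> ball c (\<epsilon>/2))"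
    then show False using C(3) sp by auto
  qed
  then show False using prob_space.AE_False[OF prob] by simp
qed

end
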